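(* A family of structures $\mathfrak{K}=\{\mathcal{A}_i:i\in\mathbb{N}\}$ is $E_{range}$-learnable if and only if $\mathfrak{K}$ is a $\Sigma^{\mathrm{inf}}_1$-partial order, i.e., for all $i\neq j$, $\mathrm{Th}_{\Sigma^{\mathrm{inf}}_1}(\mathcal{A}_i)\neq\mathrm{Th}_{\Sigma^{\mathrm{inf}}_1}(\mathcal{A}_j)$.
   Context: All structures are countable, have domain $\mathbb{N}$, are in a finite relational signature, and are identified with their atomic diagrams (elements of $2^{\mathbb{N}}$). A family of structures is a countable set of pairwise nonisomorphic such structures. $\mathrm{LD}(\mathfrak{K})\subseteq 2^{\mathbb{N}}$ is the set of structures with domain $\mathbb{N}$ isomorphic to a member of $\mathfrak{K}$ (subspace topology). For an equivalence relation $E$ on a space $X$, $\mathfrak{K}$ is $E$-learnable if there is a continuous $\Gamma:\mathrm{LD}(\mathfrak{K})\to X$ with $\mathcal{S}\cong\mathcal{S}'\iff\Gamma(\mathcal{S})\,E\,\Gamma(\mathcal{S}')$ for all $\mathcal{S},\mathcal{S}'\in\mathrm{LD}(\mathfrak{K})$. $E_{range}$ is the equivalence relation on Baire space $\mathbb{N}^{\mathbb{N}}$ given by $p\,E_{range}\,q\iff\{p(m):m\in\mathbb{N}\}=\{q(m):m\in\mathbb{N}\}$. $\mathrm{Th}_{\Sigma^{\mathrm{inf}}_1}(\mathcal{A})$ is the set of $\Sigma^{\mathrm{inf}}_1$ sentences of $\mathcal{L}_{\omega_1\omega}$ true in $\mathcal{A}$, where a $\Sigma^{\mathrm{inf}}_1$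 formula is a countable disjunction $\bigvee_i\exists\bar y_i\,\psi_i(\bar x,\bar y_i)$ with each $\psi_i$ finitary quantifier-free. *)

theory Defs
  imports "HOL-Analysis.Analysis"
begin

text \<open>A finite relational signature is a list of arities: symbol k (k < length sig)
  has arity sig ! k.  A structure with domain nat is given by its relations:
  S k xs holds iff the k-th relation holds of the tuple xs.  The space of all
  such objects, with the product topology on nat => nat list => bool (bool
  discrete), is the Cantor space of atomic diagrams.\<close>

type_synonym struc = "nat \<Rightarrow> nat list \<Rightarrow> bool"

definition is_struc :: "nat list \<Rightarrow> struc \<Rightarrow> bool" where
  "is_struc sig S \<longleftrightarrow> (\<forall>k xs. S k xs \<longrightarrow> k < length sig \<and> length xs = sig ! k)"

definition iso :: "struc \<Rightarrow> struc \<Rightarrow> bool" where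
  "iso S T \<longleftrightarrow> (\<exists>f. bij f \<and> (\<forall>k xs. S k xs \<longleftrightarrow> T k (map f xs)))"

datatype qf = QTrue | QEq nat nat | QRel nat "nat list" | QNot qf | QAnd qf qf | QOr qf qf

fun wf_qf :: "nat list \<Rightarrow> qf \<Rightarrow> bool" where
  "wf_qf sig QTrue = True"
| "wf_qf sig (QEq i j) = True"
| "wf_qf sig (QRel k vs) = (k < length sig \<and> length vs = sig ! k)"
| "wf_qf sig (QNot p) = wf_qf sig p"
| "wf_qf sig (QAnd p q) = (wf_qf sig p \<and> wf_qf sig q)"
| "wf_qf sig (QOr p q) = (wf_qf sig p \<and> wf_qf sig q)"

fun eval_qf :: "struc \<Rightarrow> (nat \<Rightarrow> nat) \<Rightarrow> qf \<Rightarrow> bool" where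
  "eval_qf S v QTrue = True"
| "eval_qf S v (QEq i j) = (v i = v j)"
| "eval_qf S v (QRel k vs) = S k (map v vs)"
| "eval_qf S v (QNot p) = (\<not> eval_qf S v p)"
| "eval_qf S v (QAnd p q) = (eval_qf S v p \<and> eval_qf S v q)"
| "eval_qf S v (QOr p q) = (eval_qf S v p \<or> eval_qf S v q)"

text \<open>A Sigma^inf_1 sentence is a countable disjunction of sentences
  \<exists>y. psi(y) with psi finitary quantifier-free; it is represented by the
  (necessarily countable, as qf is a countable type) set of its disjuncts psi,
  all of whose variables are existentially bound.\<close>
definition sigma1_sentences :: "nat list \<Rightarrow> qf set set" where
  "sigma1_sentences sig = {\<Phi>. countable \<Phi> \<and> (\<forall>\<psi>\<in>\<Phi>. wf_qf sig \<psi>)}"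

definition sat_sigma1 :: "struc \<Rightarrow> qf set \<Rightarrow> bool" where
  "sat_sigma1 S \<Phi> \<longleftrightarrow> (\<exists>\<psi>\<in>\<Phi>. \<exists>v. eval_qf S v \<psi>)"

definition Th_sigma1 :: "nat list \<Rightarrow> struc \<Rightarrow> qf set set" where
  "Th_sigma1 sig S = {\<Phi> \<in> sigma1_sentences sig. sat_sigma1 S \<Phi>}"

definition LD :: "nat list \<Rightarrow> (nat \<Rightarrow> struc) \<Rightarrow> struc set" where
  "LD sig A = {S. is_struc sig S \<and> (\<exists>i. iso S (A i))}"

definition E_range :: "(nat \<Rightarrow> nat) \<Rightarrow> (nat \<Rightarrow> nat) \<Rightarrow> bool" where
  "E_range p q \<longleftrightarrow> range p = range q"

definition E_learnable ::
  "('x::topological_space \<Rightarrow> 'x \<Rightarrow> bool) \<Rightarrow> nat list \<Rightarrow> (nat \<Rightarrow> struc) \<Rightarrow> bool" where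
  "E_learnable E sig A \<longleftrightarrow> (\<exists>\<Gamma> :: struc \<Rightarrow> 'x. continuous_on (LD sig A) \<Gamma> \<and>
     (\<forall>S\<in>LD sig A. \<forall>T\<in>LD sig A. iso S T \<longleftrightarrow> E (\<Gamma> S) (\<Gamma> T)))"

definition is_family :: "nat list \<Rightarrow> (nat \<Rightarrow> struc) \<Rightarrow> bool" where
  "is_family sig A \<longleftrightarrow> (\<forall>i. is_struc sig (A i)) \<and> (\<forall>i j. i \<noteq> j \<longrightarrow> \<not> iso (A i) (A j))"

end

theory Submission
  imports Defs "HOL-Library.Countable" "HOL-Library.Infinite_Set"
begin

instance qf :: countable by countable_datatype

lemma iso_refl: "iso S S"
  unfolding iso_def by (rule exI[of _ id]) simp

lemma iso_sym: assumes "iso S T" shows "iso T S"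
proof -
  obtain f where f: "bij f" "\<And>k xs. S k xs \<longleftrightarrow> T k (map f xs)" using assms unfolding iso_def by blast
  have "T k xs \<longleftrightarrow> S k (map (inv f) xs)" for k xs
    using f(2)[of k "map (inv f) xs"] f(1) by (simp add: bij_is_surj surj_f_inv_f comp_def)
  moreover have "bij (inv f)" using f(1) by (simp add: bij_imp_bij_inv)
  ultimately show ?thesis unfolding iso_def by blast
qed

lemma iso_trans: assumes "iso S T" "iso T U" shows "iso S U"
proof -
  obtain f where f: "bij f" "\<And>k xs. S k xs \<longleftrightarrow> T k (map f xs)" using assms unfolding iso_def by blast
  obtain g where g: "bij g" "\<And>k xs. T k xs \<longleftrightarrow> U k (map g xs)" using assms unfolding iso_def by blast
  have "S k xs \<longleftrightarrow> U k (map (g \<circ> f) xs)" for k xs using f g by simp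
  moreover have "bij (g \<circ> f)" using f g by (simp add: bij_comp)
  ultimately show ?thesis unfolding iso_def by blast
qed

lemma eval_map:
  assumes "inj f" "\<And>k xs. S k xs \<longleftrightarrow> T k (map f xs)"
  shows "eval_qf S v \<psi> = eval_qf T (f \<circ> v) \<psi>"
  by (induction \<psi>) (auto simp: assms(2) comp_def inj_eq[OF assms(1)])

definition satset :: "struc \<Rightarrow> qf set" where
  "satset S = {\<psi>. \<exists>v. eval_qf S v \<psi>}"

lemma satset_iso: assumes "iso S T" shows "satset S = satset T"
proof -
  obtain f where f: "bij f" "\<And>k xs. S k xs \<longleftrightarrow> T k (map f xs)" using assms unfolding iso_def by blast
  have "(\<exists>v. eval_qf S v \<psi>) \<longleftrightarrow> (\<exists>v. eval_qf T v \<psi>)" for \<psi>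
  proof
    assume "\<exists>v. eval_qf S v \<psi>" then show "\<exists>v. eval_qf T v \<psi>" using eval_map[of f S T, OF bij_is_inj[OF f(1)] f(2)] by blast
  next
    assume "\<exists>v. eval_qf T v \<psi>"
    then obtain v where "eval_qf T v \<psi>" by blast
    hence "eval_qf T (f \<circ> (inv f \<circ> v)) \<psi>" using f(1)
      by (simp add: comp_def bij_is_surj surj_f_inv_f)
    then show "\<exists>v. eval_qf S v \<psi>" using eval_map[of f S T, OF bij_is_inj[OF f(1)] f(2)] by blast
  qed
  then show ?thesis unfolding satset_def by blast
qed

lemma Th_satset: "Th_sigma1 sig S = {\<Phi> \<in> sigma1_sentences sig. \<exists>\<psi>\<in>\<Phi>. \<psi> \<in> satset S}"
  unfolding Th_sigma1_def sat_sigma1_def satset_def by auto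

lemma tendsto_fun_iff:
  "((f :: 'c \<Rightarrow> 'a \<Rightarrow> 'b::topological_space) \<longlongrightarrow> l) F \<longleftrightarrow> (\<forall>i. ((\<lambda>c. f c i) \<longlongrightarrow> l i) F)"
proof -
  have "(f \<longlongrightarrow> l) F \<longleftrightarrow> limitin (product_topology (\<lambda>i. euclidean) UNIV) f l F"
    by (simp add: euclidean_product_topology)
  then show ?thesis by (simp add: limitin_componentwise)
qed


fun qbound :: "qf \<Rightarrow> nat" where
  "qbound QTrue = 0"
| "qbound (QEq i j) = max i j + 1"
| "qbound (QRel k vs) = sum_list vs + 1"
| "qbound (QNot p) = qbound p"
| "qbound (QAnd p q) = max (qbound p) (qbound q)"
| "qbound (QOr p q) = max (qbound p) (qbound q)"

lemma eval_local:
  "(\<And>i. i < qbound \<psi> \<Longrightarrow> v i = w i) \<Longrightarrow> eval_qf S v \<psi> = eval_qf S w \<psi>"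
proof (induction \<psi>)
  case (QRel k vs)
  have "\<forall>x\<in>set vs. v x = w x"
    using QRel member_le_sum_list[of _ vs] by fastforce
  then have "map v vs = map w vs" by simp
  then show ?case by (metis eval_qf.simps(3))
qed auto

definition fv :: "nat list \<Rightarrow> nat \<Rightarrow> nat" where
  "fv ys i = (if i < length ys then ys ! i else 0)"

definition G :: "struc \<Rightarrow> nat \<Rightarrow> nat" where
  "G S m = (case from_nat m :: qf \<times> nat list of (\<psi>, ys) \<Rightarrow>
     if eval_qf S (fv ys) \<psi> then to_nat \<psi> else to_nat QTrue)"

lemma range_G: "range (G S) = to_nat ` satset S"
proof
  show "range (G S) \<subseteq> to_nat ` satset S"
  proof
    fix y assume "y \<in> range (G S)"
    then obtain m where m: "y = G S m" by blast
    obtain \<psi> ys where p: "from_nat m = (\<psi> :: qf, ys :: nat list)" by (metis prod.exhaust)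
    have "QTrue \<in> satset S" unfolding satset_def by simp
    then show "y \<in> to_nat ` satset S" using m p unfolding G_def
      by (auto simp: satset_def)
  qed
next
  show "to_nat ` satset S \<subseteq> range (G S)"
  proof
    fix y assume "y \<in> to_nat ` satset S"
    then obtain \<psi> v where y: "y = to_nat \<psi>" and e: "eval_qf S v \<psi>" unfolding satset_def by blast
    define ys where "ys = map v [0..<qbound \<psi>]"
    have "eval_qf S (fv ys) \<psi>"
      using e eval_local[of \<psi> "fv ys" v S] by (simp add: fv_def ys_def)
    then have "G S (to_nat (\<psi>, ys)) = y" unfolding G_def y by simp
    then show "y \<in> range (G S)" by (metis rangeI)
  qed
qed

lemma open_coord: "open {S :: struc. S k xs}" "open {S :: struc. \<not> S k xs}"
proof -
  have c: "continuous_on UNIV (\<lambda>S :: struc. S k xs)"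
    by (rule continuous_on_product_then_coordinatewise[OF continuous_on_product_coordinates])
  have "open ((\<lambda>S :: struc. S k xs) -` {True})"
    using c by (intro open_vimage) (auto simp: open_discrete)
  then show "open {S :: struc. S k xs}" by (simp add: vimage_def)
  have "open ((\<lambda>S :: struc. S k xs) -` {False})"
    using c by (intro open_vimage) (auto simp: open_discrete)
  then show "open {S :: struc. \<not> S k xs}" by (simp add: vimage_def)
qed

lemma open_eval: "open {S. eval_qf S v \<psi>} \<and> open {S. \<not> eval_qf S v \<psi>}"
proof (induction \<psi>)
  case (QAnd p q)
  have "{S. eval_qf S v (QAnd p q)} = {S. eval_qf S v p} \<inter> {S. eval_qf S v q}"
       "{S. \<not> eval_qf S v (QAnd p q)} = {S. \<not> eval_qf S v p} \<union> {S. \<not> eval_qf S v q}" by auto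
  then show ?case using QAnd by auto
next
  case (QOr p q)
  have "{S. eval_qf S v (QOr p q)} = {S. eval_qf S v p} \<union> {S. eval_qf S v q}"
       "{S. \<not> eval_qf S v (QOr p q)} = {S. \<not> eval_qf S v p} \<inter> {S. \<not> eval_qf S v q}" by auto
  then show ?case using QOr by auto
qed (auto simp: open_coord)

lemma cont_if: "continuous_on X (\<lambda>S. if eval_qf S v \<psi> then a else (b::'b::topological_space))"
  unfolding continuous_on_open_invariant
proof (intro allI impI)
  fix B :: "'b set"
  let ?P = "{S. eval_qf S v \<psi>}" and ?N = "{S. \<not> eval_qf S v \<psi>}"
  define A where "A = (if a \<in> B then ?P else {}) \<union> (if b \<in> B then ?N else {})"
  have "open A" unfolding A_def using open_eval[of v \<psi>] by auto
  moreover have "A \<inter> X = (\<lambda>S. if eval_qf S v \<psi> then a else b) -` B \<inter> X"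
    unfolding A_def by (auto split: if_splits)
  ultimately show "\<exists>A. open A \<and> A \<inter> X = (\<lambda>S. if eval_qf S v \<psi> then a else b) -` B \<inter> X" by blast
qed

lemma cont_G: "continuous_on X G"
proof (rule continuous_on_coordinatewise_then_product)
  fix m
  obtain \<psi> ys where p: "from_nat m = (\<psi> :: qf, ys :: nat list)" by (metis prod.exhaust)
  have eq: "(\<lambda>S. G S m) = (\<lambda>S. if eval_qf S (fv ys) \<psi> then to_nat \<psi> else to_nat QTrue)"
    unfolding G_def p by simp
  show "continuous_on X (\<lambda>S. G S m)" unfolding eq by (rule cont_if)
qed


lemma learn_if:
  assumes H: "\<forall>i j. i \<noteq> j \<longrightarrow> Th_sigma1 sig (A i) \<noteq> Th_sigma1 sig (A j)"
  shows "E_learnable (E_range :: (nat \<Rightarrow> nat) \<Rightarrow> (nat \<Rightarrow> nat) \<Rightarrow> bool) sig A"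
  unfolding E_learnable_def
proof (intro exI conjI ballI)
  show "continuous_on (LD sig A) G" by (rule cont_G)
  fix S T assume S: "S \<in> LD sig A" and T: "T \<in> LD sig A"
  obtain a where a: "iso S (A a)" using S unfolding LD_def by blast
  obtain b where b: "iso T (A b)" using T unfolding LD_def by blast
  show "iso S T \<longleftrightarrow> E_range (G S) (G T)"
  proof
    assume "iso S T" then show "E_range (G S) (G T)"
      unfolding E_range_def range_G by (simp add: satset_iso)
  next
    assume "E_range (G S) (G T)"
    then have "to_nat ` satset S = to_nat ` satset T" unfolding E_range_def range_G .
    then have "satset S = satset T" by (simp add: inj_image_eq_iff)
    then have "satset (A a) = satset (A b)" using satset_iso[OF a] satset_iso[OF b] by simp
    then have "Th_sigma1 sig (A a) = Th_sigma1 sig (A b)" by (simp add: Th_satset)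
    then have "a = b" using H by blast
    then show "iso S T" using a b iso_sym iso_trans by blast
  qed
qed


fun conjs :: "qf list \<Rightarrow> qf" where
  "conjs [] = QTrue"
| "conjs (p # ps) = QAnd p (conjs ps)"

lemma eval_conjs: "eval_qf S v (conjs ps) \<longleftrightarrow> (\<forall>p\<in>set ps. eval_qf S v p)"
  by (induction ps) auto

lemma wf_conjs: "wf_qf sig (conjs ps) \<longleftrightarrow> (\<forall>p\<in>set ps. wf_qf sig p)"
  by (induction ps) auto

definition lit :: "struc \<Rightarrow> nat \<Rightarrow> nat list \<Rightarrow> qf" where
  "lit S k t = (if S k t then QRel k t else QNot (QRel k t))"

definition diagf :: "nat list \<Rightarrow> struc \<Rightarrow> nat \<Rightarrow> qf" where
  "diagf sig S n = conjs (map (\<lambda>(a,b). QNot (QEq a b)) (filter (\<lambda>(a,b). a \<noteq> b) (List.product [0..<n] [0..<n]))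
      @ concat (map (\<lambda>k. map (lit S k) (List.n_lists (sig!k) [0..<n])) [0..<length sig]))"

lemma bij_ext:
  fixes v :: "nat \<Rightarrow> nat"
  assumes inj: "inj_on v {..<n}"
  shows "\<exists>f. bij f \<and> (\<forall>x<n. f x = v x)"
proof -
  define V where "V = v ` {..<n}"
  have "finite V" unfolding V_def by simp
  then have inf: "infinite (- V)"
    by (metis Compl_eq_Diff_UNIV finite_Diff2 infinite_UNIV_nat)
  define e where "e = enumerate (- V)"
  have be: "bij_betw e UNIV (- V)" unfolding e_def by (rule bij_enumerate[OF inf])
  define f where "f x = (if x < n then v x else e (x - n))" for x
  have inj_e: "inj e" using be bij_betw_imp_inj_on by blast
  have eV: "e y \<notin> V" for y using be bij_betw_apply by fastforce
  have vV: "x < n \<Longrightarrow> v x \<in> V" for x unfolding V_def by simp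
  have "inj f"
  proof (rule injI)
    fix x y assume fxy: "f x = f y"
    show "x = y"
    proof (cases "x < n")
      case True
      show ?thesis
      proof (cases "y < n")
        case True
        then show ?thesis using \<open>x < n\<close> fxy inj unfolding f_def inj_on_def by simp
      next
        case False
        then show ?thesis using \<open>x < n\<close> fxy vV eV unfolding f_def by (metis)
      qed
    next
      case False
      show ?thesis
      proof (cases "y < n")
        case True
        then show ?thesis using \<open>\<not> x < n\<close> fxy vV eV unfolding f_def by (metis)
      next
        case False
        then have "e (x - n) = e (y - n)" using \<open>\<not> x < n\<close> fxy unfolding f_def by simp
        then have "x - n = y - n" using inj_e by (simp add: inj_eq)
        then show ?thesis using False \<open>\<not> x < n\<close> by simp
      qed
    qed
  qed
  moreover have "surj f"
  proof -
    have "y \<in> range f" for y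
    proof (cases "y \<in> V")
      case True
      then obtain x where "x < n" "y = v x" unfolding V_def by auto
      then have "f x = y" unfolding f_def by simp
      then show ?thesis by (metis rangeI)
    next
      case False
      then have "y \<in> e ` UNIV" using be bij_betw_imp_surj_on by (metis ComplI)
      then obtain k where "y = e k" by blast
      then have "f (k + n) = y" unfolding f_def by simp
      then show ?thesis by (metis rangeI)
    qed
    then show ?thesis by blast
  qed
  ultimately have "bij f" by (simp add: bij_def)
  moreover have "\<forall>x<n. f x = v x" unfolding f_def by simp
  ultimately show ?thesis by blast
qed

lemma embed:
  assumes Si: "is_struc sig Ai" and Sj: "is_struc sig Aj"
    and Th: "Th_sigma1 sig Ai = Th_sigma1 sig Aj"
  shows "\<exists>T. is_struc sig T \<and> iso T Aj \<and> (\<forall>k xs. set xs \<subseteq> {..<n} \<longrightarrow> T k xs = Ai k xs)"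
proof -
  define \<psi> where "\<psi> = diagf sig Ai n"
  have wf: "wf_qf sig \<psi>"
    unfolding \<psi>_def diagf_def wf_conjs by (fastforce simp: lit_def dest: length_n_lists_elem)
  have ev: "eval_qf Ai id \<psi>"
    unfolding \<psi>_def diagf_def eval_conjs by (auto simp: lit_def)
  have "{\<psi>} \<in> Th_sigma1 sig Ai"
    unfolding Th_sigma1_def sigma1_sentences_def sat_sigma1_def using wf ev by auto
  then have "{\<psi>} \<in> Th_sigma1 sig Aj" using Th by simp
  then obtain v where v: "eval_qf Aj v \<psi>"
    unfolding Th_sigma1_def sat_sigma1_def by auto
  have vall: "\<And>p. p \<in> set (map (\<lambda>(a,b). QNot (QEq a b)) (filter (\<lambda>(a,b). a \<noteq> b) (List.product [0..<n] [0..<n])))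
      \<or> p \<in> set (concat (map (\<lambda>k. map (lit Ai k) (List.n_lists (sig!k) [0..<n])) [0..<length sig]))
      \<Longrightarrow> eval_qf Aj v p"
  proof -
    fix p assume "p \<in> set (map (\<lambda>(a,b). QNot (QEq a b)) (filter (\<lambda>(a,b). a \<noteq> b) (List.product [0..<n] [0..<n])))
      \<or> p \<in> set (concat (map (\<lambda>k. map (lit Ai k) (List.n_lists (sig!k) [0..<n])) [0..<length sig]))"
    then have "p \<in> set (map (\<lambda>(a,b). QNot (QEq a b)) (filter (\<lambda>(a,b). a \<noteq> b) (List.product [0..<n] [0..<n]))
      @ concat (map (\<lambda>k. map (lit Ai k) (List.n_lists (sig!k) [0..<n])) [0..<length sig]))"
      by (simp only: set_append Un_iff)
    then show "eval_qf Aj v p" using v unfolding \<psi>_def diagf_def eval_conjs by blast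
  qed
  have injv: "inj_on v {..<n}"
  proof (rule inj_onI)
    fix a b assume "a \<in> {..<n}" "b \<in> {..<n}" "v a = v b"
    show "a = b"
    proof (rule ccontr)
      assume "a \<noteq> b"
      then have "QNot (QEq a b) \<in> set (map (\<lambda>(a,b). QNot (QEq a b)) (filter (\<lambda>(a,b). a \<noteq> b) (List.product [0..<n] [0..<n])))"
        using \<open>a \<in> {..<n}\<close> \<open>b \<in> {..<n}\<close> by (simp add: image_iff)
      then have "eval_qf Aj v (QNot (QEq a b))" using vall by blast
      then show False using \<open>v a = v b\<close> by simp
    qed
  qed
  have agree: "Ai k t = Aj k (map v t)"
    if "k < length sig" "length t = sig ! k" "set t \<subseteq> {..<n}" for k t
  proof -
    have "lit Ai k t \<in> set (concat (map (\<lambda>k. map (lit Ai k) (List.n_lists (sig!k) [0..<n])) [0..<length sig]))"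
      apply (simp add: set_n_lists image_iff)
      apply (rule bexI[of _ k])
      apply (rule exI[of _ t])
      using that by auto
    then have "eval_qf Aj v (lit Ai k t)" using vall by blast
    then show ?thesis unfolding lit_def by (auto split: if_splits)
  qed
  obtain f where f: "bij f" "\<forall>x<n. f x = v x" using bij_ext[OF injv] by blast
  define T where "T k xs = Aj k (map f xs)" for k xs
  have "is_struc sig T" using Sj unfolding is_struc_def T_def by (metis length_map)
  moreover have "iso T Aj" unfolding iso_def T_def using f(1) by blast
  moreover have "T k xs = Ai k xs" if "set xs \<subseteq> {..<n}" for k xs
  proof -
    have m: "map f xs = map v xs" using that f(2) by (auto intro!: map_cong)
    show ?thesis
    proof (cases "k < length sig \<and> length xs = sig ! k")
      case True
      have "T k xs = Aj k (map v xs)" unfolding T_def m by (rule refl)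
      then show ?thesis using agree[of k xs] that True by simp
    next
      case False
      have "T k xs = Aj k (map v xs)" unfolding T_def m by (rule refl)
      then show ?thesis using Si Sj False unfolding is_struc_def by (metis length_map)
    qed
  qed
  ultimately show ?thesis by blast
qed


lemma range_sub:
  fixes \<Gamma> :: "struc \<Rightarrow> nat \<Rightarrow> nat"
  assumes fam: "is_family sig A"
    and cont: "continuous_on (LD sig A) \<Gamma>"
    and eq: "\<forall>S\<in>LD sig A. \<forall>T\<in>LD sig A. iso S T \<longleftrightarrow> E_range (\<Gamma> S) (\<Gamma> T)"
    and Th: "Th_sigma1 sig (A i) = Th_sigma1 sig (A j)"
  shows "range (\<Gamma> (A i)) \<subseteq> range (\<Gamma> (A j))"
proof
  fix x assume "x \<in> range (\<Gamma> (A i))"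
  then obtain m where xm: "x = \<Gamma> (A i) m" by blast
  have si: "is_struc sig (A i)" and sj: "is_struc sig (A j)" using fam unfolding is_family_def by auto
  define P where "P n T \<longleftrightarrow> is_struc sig T \<and> iso T (A j) \<and> (\<forall>k xs. set xs \<subseteq> {..<n} \<longrightarrow> T k xs = A i k xs)" for n T
  define Ts where "Ts n = (SOME T. P n T)" for n
  have PT: "P n (Ts n)" for n
    unfolding Ts_def using embed[OF si sj Th, of n] unfolding P_def by (rule someI_ex)
  have LDT: "Ts n \<in> LD sig A" for n using PT[of n] unfolding P_def LD_def by blast
  have LDi: "A i \<in> LD sig A" using si iso_refl unfolding LD_def by blast
  have "(Ts \<longlongrightarrow> A i) sequentially"
    unfolding tendsto_fun_iff
  proof (intro allI)
    fix k xs
    have "\<forall>\<^sub>F n in sequentially. Ts n k xs = A i k xs"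
      unfolding eventually_sequentially
    proof (intro exI[of _ "Suc (sum_list xs)"] allI impI)
      fix n assume "Suc (sum_list xs) \<le> n"
      then have "set xs \<subseteq> {..<n}" using member_le_sum_list[of _ xs] by fastforce
      then show "Ts n k xs = A i k xs" using PT[of n] unfolding P_def by blast
    qed
    then show "((\<lambda>n. Ts n k xs) \<longlongrightarrow> A i k xs) sequentially" by (simp add: tendsto_discrete)
  qed
  then have "((\<lambda>n. \<Gamma> (Ts n)) \<longlongrightarrow> \<Gamma> (A i)) sequentially"
    by (rule continuous_on_tendsto_compose[OF cont _ LDi]) (simp_all add: LDT)
  then have "((\<lambda>n. \<Gamma> (Ts n) m) \<longlongrightarrow> \<Gamma> (A i) m) sequentially"
    unfolding tendsto_fun_iff by blast
  then have "\<forall>\<^sub>F n in sequentially. \<Gamma> (Ts n) m = x" unfolding xm by (simp add: tendsto_discrete)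
  then obtain n where n: "\<Gamma> (Ts n) m = x" unfolding eventually_sequentially by blast
  have "iso (Ts n) (A j)" using PT[of n] unfolding P_def by blast
  moreover have "A j \<in> LD sig A" using sj iso_refl unfolding LD_def by blast
  ultimately have "range (\<Gamma> (Ts n)) = range (\<Gamma> (A j))" using eq LDT unfolding E_range_def by blast
  then show "x \<in> range (\<Gamma> (A j))" using n by (metis rangeI)
qed

theorem mainTheorem6:
  fixes sig :: "nat list" and A :: "nat \<Rightarrow> struc"
  assumes "is_family sig A"
  shows "E_learnable (E_range :: (nat \<Rightarrow> nat) \<Rightarrow> (nat \<Rightarrow> nat) \<Rightarrow> bool) sig A \<longleftrightarrow>
         (\<forall>i j. i \<noteq> j \<longrightarrow> Th_sigma1 sig (A i) \<noteq> Th_sigma1 sig (A j))"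
proof
  assume "E_learnable (E_range :: (nat \<Rightarrow> nat) \<Rightarrow> (nat \<Rightarrow> nat) \<Rightarrow> bool) sig A"
  then obtain \<Gamma> :: "struc \<Rightarrow> nat \<Rightarrow> nat" where cont: "continuous_on (LD sig A) \<Gamma>"
    and eq: "\<forall>S\<in>LD sig A. \<forall>T\<in>LD sig A. iso S T \<longleftrightarrow> E_range (\<Gamma> S) (\<Gamma> T)"
    unfolding E_learnable_def by blast
  show "\<forall>i j. i \<noteq> j \<longrightarrow> Th_sigma1 sig (A i) \<noteq> Th_sigma1 sig (A j)"
  proof (intro allI impI notI)
    fix i j assume ij: "i \<noteq> j" and Th: "Th_sigma1 sig (A i) = Th_sigma1 sig (A j)"
    have "range (\<Gamma> (A i)) = range (\<Gamma> (A j))"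
      using range_sub[OF assms cont eq Th] range_sub[OF assms cont eq Th[symmetric]] by blast
    moreover have "A i \<in> LD sig A" "A j \<in> LD sig A"
      using assms iso_refl unfolding is_family_def LD_def by blast+
    ultimately have "iso (A i) (A j)" using eq unfolding E_range_def by blast
    then show False using assms ij unfolding is_family_def by blast
  qed
next
  assume "\<forall>i j. i \<noteq> j \<longrightarrow> Th_sigma1 sig (A i) \<noteq> Th_sigma1 sig (A j)"
  then show "E_learnable (E_range :: (nat \<Rightarrow> nat) \<Rightarrow> (nat \<Rightarrow> nat) \<Rightarrow> bool) sig A"
    by (rule learn_if)
qed

end
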